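(* Let $d\ge 2$, $x\in\mathbb{R}^d$, $V\subseteq\{1,\dots,d\}$ (of any parity), and let $\theta\in\{\pm1\}^d$ with $\theta_j=1$ for $j\in V$ and $\theta_j=-1$ for $j\notin V$. Let $v = \Pi_{\{w\in\mathbb{R}^d:\theta^\top w = |V|-1\}}(x)$ and let $F := \{w\in[0,1]^d : \theta^\top w = |V|-1\}$, assumed nonempty, and $z = \Pi_F(x)$. Let $i\in\{1,\dots,d\}$. Then: 1. If $v_i>1$ and $\theta_i = 1$, then $z_i = 1$. 2. If $v_i<0$ and $\theta_i=-1$, then $z_i=0$.
   Context: $\Pi_C(x)$ denotes the Euclidean projection of $x$ onto a closed convex set $C$. *)

theory Defs
  imports "HOL-Analysis.Analysis"
begin

end

theory Submission
  imports Defs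
begin

lemma inner_vec_sum: "(a::real^'n) \<bullet> b = (\<Sum>j\<in>UNIV. a$j * b$j)"
  by (simp add: inner_vec_def)

theorem theorem2:
  fixes x \<theta> :: "real ^ 'n" and V :: "'n set" and i :: 'n
  assumes "CARD('n) \<ge> 2"
    and "\<forall>j. (j \<in> V \<longrightarrow> \<theta> $ j = 1) \<and> (j \<notin> V \<longrightarrow> \<theta> $ j = -1)"
    and "{w :: real ^ 'n. (\<forall>j. 0 \<le> w $ j \<and> w $ j \<le> 1) \<and> \<theta> \<bullet> w = real (card V) - 1} \<noteq> {}"
  shows "(closest_point {w. \<theta> \<bullet> w = real (card V) - 1} x $ i > 1 \<and> \<theta> $ i = 1 \<longrightarrow>
           closest_point {w. (\<forall>j. 0 \<le> w $ j \<and> w $ j \<le> 1) \<and> \<theta> \<bullet> w = real (card V) - 1} x $ i = 1)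
       \<and> (closest_point {w. \<theta> \<bullet> w = real (card V) - 1} x $ i < 0 \<and> \<theta> $ i = -1 \<longrightarrow>
           closest_point {w. (\<forall>j. 0 \<le> w $ j \<and> w $ j \<le> 1) \<and> \<theta> \<bullet> w = real (card V) - 1} x $ i = 0)"
proof -
  define b where "b = real (card V) - 1"
  define H where "H = {w :: real^'n. \<theta> \<bullet> w = b}"
  define F where "F = {w :: real ^ 'n. (\<forall>j. 0 \<le> w $ j \<and> w $ j \<le> 1) \<and> \<theta> \<bullet> w = b}"
  define v where "v = closest_point H x"
  define z where "z = closest_point F x"
  have th: "\<theta>$j = 1 \<or> \<theta>$j = -1" for j using assms(2) by metis
  have th2: "\<theta>$j * \<theta>$j = 1" for j using th[of j] by auto
  have Fne: "F \<noteq> {}" using assms(3) unfolding F_def b_def .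
  have Fsub: "F \<subseteq> H" unfolding F_def H_def by auto
  have Hne: "H \<noteq> {}" using Fne Fsub by auto
  have Hcl: "closed H" unfolding H_def by (rule closed_hyperplane)
  have Hcv: "convex H" unfolding H_def by (rule convex_hyperplane)
  have Fcl: "closed F"
  proof -
    have "F = {w. \<forall>j. 0 \<le> w $ j \<and> w $ j \<le> 1} \<inter> H" unfolding F_def H_def by auto
    moreover have "closed {w::real^'n. \<forall>j. 0 \<le> w $ j \<and> w $ j \<le> 1}"
      by (intro closed_Collect_all closed_Collect_conj closed_Collect_le continuous_intros)
    ultimately show ?thesis using Hcl by auto
  qed
  have Fcv: "convex F"
    unfolding F_def convex_def
    apply (auto simp: inner_add_right add_nonneg_nonneg mult_le_one convex_bound_le)
    by (metis distrib_right mult_1)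
  have vH: "v \<in> H" unfolding v_def using closest_point_in_set[OF Hcl Hne] .
  have zF: "z \<in> F" unfolding z_def using closest_point_in_set[OF Fcl Fne] .
  define d where "d = (\<lambda>k. \<theta>$i *\<^sub>R axis i (1::real) - \<theta>$k *\<^sub>R axis k 1)"
  have thd: "\<theta> \<bullet> d k = 0" for k
    unfolding d_def using th2[of i] th2[of k] by (simp add: inner_diff_right inner_axis)
  have ind: "y \<bullet> d k = \<theta>$i * y$i - \<theta>$k * y$k" for y k
    unfolding d_def by (simp add: inner_diff_right inner_axis)
  have dn: "d k $ j = \<theta>$i * (if j = i then 1 else 0) - \<theta>$k * (if j = k then 1 else 0)" for k j
    unfolding d_def by (simp add: axis_def)
  have B: "\<theta>$i * (x$i - v$i) = \<theta>$k * (x$k - v$k)" for k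
  proof -
    have "v + d k \<in> H" "v - d k \<in> H" using vH thd[of k] unfolding H_def
      by (auto simp: inner_add_right inner_diff_right)
    from closest_point_dot[OF Hcv Hcl this(1), of x] closest_point_dot[OF Hcv Hcl this(2), of x]
    have "(x - v) \<bullet> d k \<le> 0" "(x - v) \<bullet> d k \<ge> 0" unfolding v_def[symmetric]
      by (auto simp: inner_minus_right)
    then show ?thesis using ind[of "x - v" k] by (simp add: algebra_simps)
  qed
  define u where "u = (\<lambda>j. (1 + \<theta>$j)/2 - \<theta>$j * z$j)"
  have u0: "u j \<ge> 0" for j using th[of j] zF unfolding u_def F_def by auto
  have usum: "sum u UNIV = 1"
  proof -
    have "(\<lambda>j. (1 + \<theta>$j)/2) = (\<lambda>j. if j \<in> V then 1 else 0)"
      using assms(2) by (auto simp: fun_eq_iff)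
    then have "(\<Sum>j\<in>UNIV. (1 + \<theta>$j)/2) = (\<Sum>j\<in>UNIV. if j \<in> V then 1 else (0::real))"
      by (rule arg_cong)
    also have "\<dots> = real (card V)" by (simp add: sum.If_cases)
    finally have "(\<Sum>j\<in>UNIV. (1 + \<theta>$j)/2) = real (card V)" .
    moreover have "(\<Sum>j\<in>UNIV. \<theta>$j * z$j) = b" using zF unfolding F_def by (simp add: inner_vec_sum)
    ultimately show ?thesis unfolding u_def b_def by (simp add: sum_subtractf)
  qed
  have uik: "u i + u k \<le> 1" if "k \<noteq> i" for k
  proof -
    have "sum u {i,k} \<le> sum u UNIV" by (rule sum_mono2) (auto simp: u0)
    then show ?thesis using that usum by simp
  qed
  have A: "\<theta>$i * (x$i - z$i) \<le> \<theta>$k * (x$k - z$k)" if "u i > 0" for k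
  proof (cases "k = i")
    case True then show ?thesis by simp
  next
    case False
    have "z + u i *\<^sub>R d k \<in> F"
      unfolding F_def
    proof (intro CollectI conjI allI)
      show "\<theta> \<bullet> (z + u i *\<^sub>R d k) = b" using zF thd[of k] unfolding F_def by (simp add: inner_add_right)
    next
      fix j
      have zj: "0 \<le> z$j" "z$j \<le> 1" "0 \<le> z$i" "z$i \<le> 1" "0 \<le> z$k" "z$k \<le> 1" using zF unfolding F_def by auto
      show "0 \<le> (z + u i *\<^sub>R d k) $ j" "(z + u i *\<^sub>R d k) $ j \<le> 1"
        using zj th[of i] th[of k] uik[OF False] u0[of i] u0[of k] False
        unfolding u_def by (auto simp: dn split: if_splits)
    qed
    from closest_point_dot[OF Fcv Fcl this, of x]
    have "u i * ((x - z) \<bullet> d k) \<le> 0" unfolding z_def[symmetric] by simp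
    then have "(x - z) \<bullet> d k \<le> 0" using that by (simp add: mult_le_0_iff)
    then show ?thesis using ind[of "x - z" k] by (simp add: algebra_simps)
  qed
  have key: "\<theta>$i * v$i \<le> \<theta>$i * z$i" if "u i > 0"
  proof -
    have s1: "(\<Sum>k\<in>UNIV. \<theta>$k * (x$k - z$k)) = \<theta> \<bullet> x - b"
      using zF unfolding F_def by (simp add: inner_vec_sum algebra_simps sum_subtractf)
    have s2: "(\<Sum>k\<in>UNIV. \<theta>$k * (x$k - v$k)) = \<theta> \<bullet> x - b"
      using vH unfolding H_def by (simp add: inner_vec_sum algebra_simps sum_subtractf)
    have "(\<Sum>k\<in>(UNIV::'n set). \<theta>$i * (x$i - z$i)) \<le> (\<Sum>k\<in>UNIV. \<theta>$k * (x$k - z$k))"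
      using A[OF that] by (intro sum_mono) auto
    also have "\<dots> = (\<Sum>k\<in>UNIV. \<theta>$k * (x$k - v$k))" using s1 s2 by simp
    also have "\<dots> = (\<Sum>k\<in>(UNIV::'n set). \<theta>$i * (x$i - v$i))" using B by (intro sum.cong) (simp, metis)
    finally have "real CARD('n) * (\<theta>$i * (x$i - z$i)) \<le> real CARD('n) * (\<theta>$i * (x$i - v$i))" by simp
    then have "\<theta>$i * (x$i - z$i) \<le> \<theta>$i * (x$i - v$i)" by simp
    then show ?thesis by (simp add: algebra_simps)
  qed
  have zi: "0 \<le> z$i" "z$i \<le> 1" using zF unfolding F_def by auto
  show ?thesis
    unfolding b_def[symmetric] H_def[symmetric] F_def[symmetric] v_def[symmetric] z_def[symmetric]
  proof (intro conjI impI)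
    assume h: "1 < v $ i \<and> \<theta> $ i = 1"
    show "z$i = 1"
    proof (rule ccontr)
      assume "z$i \<noteq> 1"
      then have "u i > 0" using zi h unfolding u_def by auto
      from key[OF this] h zi show False by auto
    qed
  next
    assume h: "v $ i < 0 \<and> \<theta> $ i = -1"
    show "z$i = 0"
    proof (rule ccontr)
      assume "z$i \<noteq> 0"
      then have "u i > 0" using zi h unfolding u_def by auto
      from key[OF this] h zi show False by auto
    qed
  qed
qed

end
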